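(* Every right coideal $\mathcal{X}$ of $\mathcal{U}$ is the direct sum $\mathcal{X}=\bigoplus_{\mu\in\mathbb{C}^\times}[\mathcal{X}]_\mu$ of its homogeneous components $[\mathcal{X}]_\mu:=\mathcal{X}\cap[\mathcal{U}]_\mu$, where $[\mathcal{U}]_\mu:=\mathrm{Lin}\{F^{(i)}f_\mu E^{(j)}G^{(k)}: i,j,k\in\mathbb{N}_0\}$.
   Context: Let $q\in\mathbb{C}$ be transcendental (in particular $q\ne0$ and not a root of unity). $\mathcal{U}$ is the unital algebra generated by $E,F,G$ and $f_\mu$ ($\mu\in\mathbb{C}^\times$) with relations $f_\mu f_\nu=f_{\mu\nu}$, $f_\mu E=\mu^2Ef_\mu$, $f_\mu F=\mu^{-2}Ff_\mu$, $f_\mu G=Gf_\mu$, $GE=E(G+2)$, $GF=F(G-2)$, $EF-FE=(f_q-f_{q^{-1}})/(q-q^{-1})$; $f_1=1$. Fix $q^{1/2}$ and put $K=f_{q^{1/2}}$. $\mathcal{U}$ is a Hopf algebra with $\Delta E=E\otimes K+K^{-1}\otimes E$, $\Delta F=F\otimes K+K^{-1}\otimes F$, $\Delta G=1\otimes G+G\otimes1$, $\Delta f_\mu=f_\mu\otimes f_\mu$. Let $[k]=(q^k-q^{-k})/(q-q^{-1})$, $[k]!=[k]\cdots[1]$, $[0]!=1$, and $F^{(k)}=F^kK^{-k}/[k]!$, $E^{(k)}=K^{-k}E^k/[k]!$, $G^{(k)}=G^k/k!$. The elements $F^{(i)}f_\mu E^{(j)}G^{(k)}$ form a basis of $\mathcal{U}$.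 A right coideal is a subspace $\mathcal{X}$ with $\Delta(\mathcal{X})\subset\mathcal{X}\otimes\mathcal{U}$. *)

theory Defs
  imports "HOL-Computational_Algebra.Polynomial" "HOL-Library.Poly_Mapping"
begin

(* Nonzero complex numbers: the index set C^x of the generators f_mu. *)
typedef nzc = "{z::complex. z \<noteq> 0}" by (rule exI[of _ 1]) simp

definition nzc_mult :: "nzc \<Rightarrow> nzc \<Rightarrow> nzc" where
  "nzc_mult a b = Abs_nzc (Rep_nzc a * Rep_nzc b)"

definition nzc_of :: "complex \<Rightarrow> nzc" where
  "nzc_of z = Abs_nzc z"   (* only used with z \<noteq> 0 *)

datatype gen = GE | GF | GG | Gf nzc

(* Free algebra A = C<gen> : finitely supported functions on words *)
type_synonym falg = "gen list \<Rightarrow>\<^sub>0 complex"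
(* A \<otimes> A, with basis pairs of words *)
type_synonym falg2 = "(gen list \<times> gen list) \<Rightarrow>\<^sub>0 complex"

definition smul :: "complex \<Rightarrow> ('w \<Rightarrow>\<^sub>0 complex) \<Rightarrow> ('w \<Rightarrow>\<^sub>0 complex)" where
  "smul c p = (\<Sum>w\<in>Poly_Mapping.keys p. Poly_Mapping.single w (c * Poly_Mapping.lookup p w))"

definition csubspace :: "('w \<Rightarrow>\<^sub>0 complex) set \<Rightarrow> bool" where
  "csubspace S \<longleftrightarrow> 0 \<in> S \<and> (\<forall>x\<in>S. \<forall>y\<in>S. x + y \<in> S) \<and> (\<forall>c. \<forall>x\<in>S. smul c x \<in> S)"

definition cspan :: "('w \<Rightarrow>\<^sub>0 complex) set \<Rightarrow> ('w \<Rightarrow>\<^sub>0 complex) set" where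
  "cspan B = \<Inter>{S. csubspace S \<and> B \<subseteq> S}"

definition wd :: "gen list \<Rightarrow> falg" where
  "wd w = Poly_Mapping.single w 1"

definition amult :: "falg \<Rightarrow> falg \<Rightarrow> falg" (infixl "\<cdot>" 70) where
  "amult p r = (\<Sum>u\<in>Poly_Mapping.keys p. \<Sum>v\<in>Poly_Mapping.keys r. Poly_Mapping.single (u @ v) (Poly_Mapping.lookup p u * Poly_Mapping.lookup r v))"

definition tmult :: "falg2 \<Rightarrow> falg2 \<Rightarrow> falg2" where
  "tmult p r = (\<Sum>u\<in>Poly_Mapping.keys p. \<Sum>v\<in>Poly_Mapping.keys r.
      Poly_Mapping.single (fst u @ fst v, snd u @ snd v) (Poly_Mapping.lookup p u * Poly_Mapping.lookup r v))"

definition tens :: "falg \<Rightarrow> falg \<Rightarrow> falg2" where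
  "tens x y = (\<Sum>u\<in>Poly_Mapping.keys x. \<Sum>v\<in>Poly_Mapping.keys y. Poly_Mapping.single (u, v) (Poly_Mapping.lookup x u * Poly_Mapping.lookup y v))"

(* Defining relations of U (as elements of the free algebra), for parameter q *)
definition rels :: "complex \<Rightarrow> falg set" where
  "rels q =
     {wd [Gf m, Gf n] - wd [Gf (nzc_mult m n)] | m n. True}
   \<union> {wd [Gf (nzc_of 1)] - wd []}
   \<union> {wd [Gf m, GE] - smul ((Rep_nzc m)^2) (wd [GE, Gf m]) | m. True}
   \<union> {wd [Gf m, GF] - smul (inverse ((Rep_nzc m)^2)) (wd [GF, Gf m]) | m. True}
   \<union> {wd [Gf m, GG] - wd [GG, Gf m] | m. True}
   \<union> {wd [GG, GE] - wd [GE, GG] - smul 2 (wd [GE])}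
   \<union> {wd [GG, GF] - wd [GF, GG] + smul 2 (wd [GF])}
   \<union> {wd [GE, GF] - wd [GF, GE]
        - smul (inverse (q - inverse q)) (wd [Gf (nzc_of q)] - wd [Gf (nzc_of (inverse q))])}"

(* The two-sided ideal generated by the relations; U = A / relideal q *)
definition relideal :: "complex \<Rightarrow> falg set" where
  "relideal q = cspan {wd u \<cdot> r \<cdot> wd v | u v r. r \<in> rels q}"

(* Coproduct on generators, with K = f_s, s = q^(1/2) *)
definition Delta_gen :: "complex \<Rightarrow> gen \<Rightarrow> falg2" where
  "Delta_gen s g = (case g of
      GE \<Rightarrow> Poly_Mapping.single ([GE], [Gf (nzc_of s)]) 1
            + Poly_Mapping.single ([Gf (nzc_of (inverse s))], [GE]) 1
    | GF \<Rightarrow> Poly_Mapping.single ([GF], [Gf (nzc_of s)]) 1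
            + Poly_Mapping.single ([Gf (nzc_of (inverse s))], [GF]) 1
    | GG \<Rightarrow> Poly_Mapping.single ([], [GG]) 1 + Poly_Mapping.single ([GG], []) 1
    | Gf m \<Rightarrow> Poly_Mapping.single ([Gf m], [Gf m]) 1)"

fun Delta_word :: "complex \<Rightarrow> gen list \<Rightarrow> falg2" where
  "Delta_word s [] = Poly_Mapping.single ([], []) 1"
| "Delta_word s (g # w) = tmult (Delta_gen s g) (Delta_word s w)"

definition Delta :: "complex \<Rightarrow> falg \<Rightarrow> falg2" where
  "Delta s p = (\<Sum>w\<in>Poly_Mapping.keys p. smul (Poly_Mapping.lookup p w) (Delta_word s w))"

definition qint :: "complex \<Rightarrow> nat \<Rightarrow> complex" where
  "qint q k = (q ^ k - inverse (q ^ k)) / (q - inverse q)"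

definition qfact :: "complex \<Rightarrow> nat \<Rightarrow> complex" where
  "qfact q k = (\<Prod>i\<in>{1..k}. qint q i)"

(* Representative in A of the PBW element F^(i) f_mu E^(j) G^(k), where
   F^(i) = F^i K^-i/[i]!, E^(j) = K^-j E^j/[j]!, G^(k) = G^k/k!, K = f_s *)
definition pbw :: "complex \<Rightarrow> nat \<Rightarrow> nzc \<Rightarrow> nat \<Rightarrow> nat \<Rightarrow> falg" where
  "pbw s i m j k =
     smul (inverse (qfact (s^2) i * qfact (s^2) j * of_nat (fact k)))
       (wd (replicate i GF @ replicate i (Gf (nzc_of (inverse s))) @ [Gf m]
            @ replicate j (Gf (nzc_of (inverse s))) @ replicate j GE @ replicate k GG))"

(* Preimage in A of the homogeneous component [U]_mu *)
definition Uhom :: "complex \<Rightarrow> nzc \<Rightarrow> falg set" where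
  "Uhom s m = cspan ({pbw s i m j k | i j k. True} \<union> relideal (s^2))"

(* Preimage in A of a right coideal: Delta(X) \<subseteq> X \<otimes> U, i.e. in A \<otimes> A,
   Delta(Xt) \<subseteq> Xt \<otimes> A + A \<otimes> I *)
definition right_coideal :: "complex \<Rightarrow> falg set \<Rightarrow> bool" where
  "right_coideal s Xt \<longleftrightarrow>
     csubspace Xt \<and> relideal (s^2) \<subseteq> Xt \<and>
     (\<forall>x\<in>Xt. Delta s x \<in> cspan ({tens y (wd w) | y w. y \<in> Xt}
                                   \<union> {tens (wd w) z | w z. z \<in> relideal (s^2)}))"

end

theory Submission
  imports Defs "HOL-Library.Product_Plus"
begin

instantiation list :: (type) monoid_add
begin
definition zero_list_def: "0 = []"
definition plus_list_def: "xs + ys = xs @ ys"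
instance by standard (auto simp: zero_list_def plus_list_def)
end

abbreviation lk where "lk \<equiv> Poly_Mapping.lookup"
abbreviation sg where "sg \<equiv> Poly_Mapping.single"
abbreviation ks where "ks \<equiv> Poly_Mapping.keys"

lemma pm_expand: "p = (\<Sum>a\<in>ks p. sg a (lk p a))"
proof (rule poly_mapping_eqI)
  fix k
  have "(\<Sum>a\<in>ks p. lk (sg a (lk p a)) k) = (\<Sum>a\<in>ks p. if a = k then lk p k else 0)"
    by (rule sum.cong) (auto simp: lookup_single when_def)
  also have "\<dots> = lk p k" by (simp add: in_keys_iff)
  finally show "lk p k = lk (\<Sum>a\<in>ks p. sg a (lk p a)) k" by (simp add: lookup_sum)
qed

lemma pm_induct [case_names zero single add]:
  fixes p :: "'a \<Rightarrow>\<^sub>0 'b::comm_monoid_add"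
  assumes "P 0" "\<And>a c. P (sg a c)" "\<And>p r. P p \<Longrightarrow> P r \<Longrightarrow> P (p + r)"
  shows "P p"
proof -
  have "P (\<Sum>a\<in>A. sg a (lk p a))" if "finite A" for A
    using that by (induction A rule: finite_induct) (auto intro: assms)
  then show ?thesis by (subst pm_expand) simp
qed

lemma lookup_smul [simp]: "lk (smul c p) w = c * lk p w"
proof -
  have "lk (smul c p) w = (\<Sum>u\<in>ks p. if u = w then c * lk p w else 0)"
    unfolding smul_def lookup_sum by (rule sum.cong) (auto simp: lookup_single when_def)
  also have "\<dots> = c * lk p w" by (simp add: in_keys_iff)
  finally show ?thesis .
qed

lemma smul_add: "smul c (p + r) = smul c p + smul c r"
  by (rule poly_mapping_eqI) (simp add: lookup_add algebra_simps)
lemma smul_add_left: "smul (c + d) p = smul c p + smul d p"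
  by (rule poly_mapping_eqI) (simp add: lookup_add algebra_simps)
lemma smul_diff: "smul c (p - r) = smul c p - smul c r"
  by (rule poly_mapping_eqI) (simp add: lookup_minus algebra_simps)
lemma smul_diff_left: "smul (c - d) p = smul c p - smul d p"
  by (rule poly_mapping_eqI) (simp add: lookup_minus algebra_simps)
lemma smul_minus: "smul c (- p) = - smul c p"
  by (rule poly_mapping_eqI) (simp)
lemma smul_smul [simp]: "smul c (smul d p) = smul (c * d) p"
  by (rule poly_mapping_eqI) (simp)
lemma smul_zero [simp]: "smul c 0 = 0"
  by (rule poly_mapping_eqI) (simp)
lemma smul_zero_left [simp]: "smul 0 p = 0"
  by (rule poly_mapping_eqI) (simp)
lemma smul_one [simp]: "smul 1 p = p"
  by (rule poly_mapping_eqI) (simp)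
lemma smul_single [simp]: "smul c (sg a d) = sg a (c * d)"
  by (rule poly_mapping_eqI) (simp add: lookup_single when_def)
lemma smul_sum: "smul c (sum f A) = (\<Sum>a\<in>A. smul c (f a))"
  by (induction A rule: infinite_finite_induct) (auto simp: smul_add)

definition lx :: "('a \<Rightarrow> ('b \<Rightarrow>\<^sub>0 complex)) \<Rightarrow> ('a \<Rightarrow>\<^sub>0 complex) \<Rightarrow> ('b \<Rightarrow>\<^sub>0 complex)" where
  "lx f p = (\<Sum>a\<in>ks p. smul (lk p a) (f a))"

lemma lx_superset: "finite S \<Longrightarrow> ks p \<subseteq> S \<Longrightarrow> lx f p = (\<Sum>a\<in>S. smul (lk p a) (f a))"
  unfolding lx_def by (rule sum.mono_neutral_left) (auto simp: in_keys_iff)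

lemma lx_add: "lx f (p + r) = lx f p + lx f r"
proof -
  let ?S = "ks p \<union> ks r"
  have "lx f (p + r) = (\<Sum>a\<in>?S. smul (lk (p + r) a) (f a))"
    by (rule lx_superset) (auto simp: keys_add)
  also have "\<dots> = (\<Sum>a\<in>?S. smul (lk p a) (f a)) + (\<Sum>a\<in>?S. smul (lk r a) (f a))"
    by (simp add: lookup_add smul_add_left sum.distrib)
  also have "\<dots> = lx f p + lx f r"
    by (simp add: lx_superset[symmetric])
  finally show ?thesis .
qed

lemma lx_zero [simp]: "lx f 0 = 0" by (simp add: lx_def)
lemma lx_single [simp]: "lx f (sg a c) = smul c (f a)"
  by (cases "c = 0") (auto simp: lx_def)
lemma lx_smul: "lx f (smul c p) = smul c (lx f p)"
  by (induction p rule: pm_induct) (auto simp: smul_add lx_add)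
lemma lx_minus: "lx f (- p) = - lx f p"
  by (metis add_eq_0_iff lx_add lx_zero neg_eq_iff_add_eq_0)
lemma lx_diff: "lx f (p - r) = lx f p - lx f r"
  by (metis diff_conv_add_uminus lx_add lx_minus)
lemma lx_sum: "lx f (sum g A) = (\<Sum>a\<in>A. lx f (g a))"
  by (induction A rule: infinite_finite_induct) (auto simp: lx_add)
lemma lx_cong: "(\<And>a. a \<in> ks p \<Longrightarrow> f a = g a) \<Longrightarrow> lx f p = lx g p"
  by (simp add: lx_def)
lemma lx_fun_add: "lx (\<lambda>a. f a + g a) p = lx f p + lx g p"
  by (simp add: lx_def smul_add sum.distrib)
lemma lx_fun_zero [simp]: "lx (\<lambda>a. 0) p = 0"
  by (simp add: lx_def)
lemma lx_fun_sum: "lx (\<lambda>a. \<Sum>i\<in>I. f i a) p = (\<Sum>i\<in>I. lx (f i) p)"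
  by (induction I rule: infinite_finite_induct) (auto simp: lx_fun_add)
lemma lx_fun_smul: "lx (\<lambda>a. smul c (f a)) p = smul c (lx f p)"
  by (induction p rule: pm_induct) (auto simp: smul_add lx_add mult.commute)
lemma lx_lx: "lx f (lx g p) = lx (\<lambda>a. lx f (g a)) p"
  by (induction p rule: pm_induct) (auto simp: lx_add lx_smul)
lemma lx_id: "lx (\<lambda>a. sg a 1) p = p"
  by (induction p rule: pm_induct) (auto simp: lx_add)

lemma double_sum_lx:
  "(\<Sum>u\<in>ks p. \<Sum>v\<in>ks r. sg (h u v) (lk p u * lk r v)) = lx (\<lambda>u. lx (\<lambda>v. sg (h u v) 1) r) p"
  unfolding lx_def by (simp add: smul_sum)

definition lxs :: "('a \<Rightarrow> complex) \<Rightarrow> ('a \<Rightarrow>\<^sub>0 complex) \<Rightarrow> complex" where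
  "lxs f p = (\<Sum>a\<in>ks p. lk p a * f a)"

lemma lxs_superset: "finite S \<Longrightarrow> ks p \<subseteq> S \<Longrightarrow> lxs f p = (\<Sum>a\<in>S. lk p a * f a)"
  unfolding lxs_def by (rule sum.mono_neutral_left) (auto simp: in_keys_iff)
lemma lxs_add: "lxs f (p + r) = lxs f p + lxs f r"
proof -
  let ?S = "ks p \<union> ks r"
  have "lxs f (p + r) = (\<Sum>a\<in>?S. lk (p + r) a * f a)"
    by (rule lxs_superset) (auto simp: keys_add)
  also have "\<dots> = (\<Sum>a\<in>?S. lk p a * f a) + (\<Sum>a\<in>?S. lk r a * f a)"
    by (simp add: lookup_add algebra_simps sum.distrib)
  also have "\<dots> = lxs f p + lxs f r"
    by (simp add: lxs_superset[symmetric])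
  finally show ?thesis .
qed
lemma lxs_zero [simp]: "lxs f 0 = 0" by (simp add: lxs_def)
lemma lxs_single [simp]: "lxs f (sg a c) = c * f a"
  by (cases "c = 0") (auto simp: lxs_def)
lemma lxs_smul: "lxs f (smul c p) = c * lxs f p"
  by (induction p rule: pm_induct) (auto simp: lxs_add smul_add algebra_simps)
lemma lxs_minus: "lxs f (- p) = - lxs f p"
  by (metis add_eq_0_iff lxs_add lxs_zero neg_eq_iff_add_eq_0)
lemma lxs_diff: "lxs f (p - r) = lxs f p - lxs f r"
  by (metis diff_conv_add_uminus lxs_add lxs_minus)
lemma lxs_lx: "lxs f (lx g p) = lxs (\<lambda>a. lxs f (g a)) p"
  by (induction p rule: pm_induct) (auto simp: lx_add lxs_add lxs_smul)

lemma csubspace_cspan: "csubspace (cspan B)"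
  unfolding csubspace_def cspan_def by auto
lemma cspan_superset: "B \<subseteq> cspan B"
  unfolding cspan_def by auto
lemma cspan_minimal: "csubspace S \<Longrightarrow> B \<subseteq> S \<Longrightarrow> cspan B \<subseteq> S"
  unfolding cspan_def by auto
lemma cspan_mono: "A \<subseteq> B \<Longrightarrow> cspan A \<subseteq> cspan B"
  unfolding cspan_def by auto

lemma csub_0: "csubspace S \<Longrightarrow> 0 \<in> S" by (simp add: csubspace_def)
lemma csub_add: "csubspace S \<Longrightarrow> x \<in> S \<Longrightarrow> y \<in> S \<Longrightarrow> x + y \<in> S" by (simp add: csubspace_def)
lemma csub_smul: "csubspace S \<Longrightarrow> x \<in> S \<Longrightarrow> smul c x \<in> S" by (simp add: csubspace_def)
lemma smul_m1: "smul (-1) x = - x"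
  by (rule poly_mapping_eqI) simp
lemma smul_neg_left: "smul (- c) x = - smul c x"
  by (rule poly_mapping_eqI) simp
lemma csub_minus: "csubspace S \<Longrightarrow> x \<in> S \<Longrightarrow> - x \<in> S"
  by (metis csub_smul smul_m1)
lemma csub_diff: "csubspace S \<Longrightarrow> x \<in> S \<Longrightarrow> y \<in> S \<Longrightarrow> x - y \<in> S"
  by (metis csub_add csub_minus diff_conv_add_uminus)
lemma csub_sum: "csubspace S \<Longrightarrow> (\<And>a. a \<in> A \<Longrightarrow> f a \<in> S) \<Longrightarrow> sum f A \<in> S"
  by (induction A rule: infinite_finite_induct) (auto intro: csub_0 csub_add)
lemma csub_lx: "csubspace S \<Longrightarrow> (\<And>a. a \<in> ks p \<Longrightarrow> f a \<in> S) \<Longrightarrow> lx f p \<in> S"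
  unfolding lx_def by (auto intro!: csub_sum csub_smul)

lemma csubspace_preimage:
  assumes "\<And>x y. L (x + y) = L x + L y" "\<And>c x. L (smul c x) = smul c (L x)" "L 0 = 0" "csubspace S"
  shows "csubspace {x. L x \<in> S}"
  using assms unfolding csubspace_def by auto

lemma smul_left: "smul c p = sg 0 c * (p :: ('a::monoid_add) \<Rightarrow>\<^sub>0 complex)"
  by (induction p rule: pm_induct) (auto simp: smul_add distrib_left mult_single)
lemma smul_right: "smul c p = (p :: ('a::monoid_add) \<Rightarrow>\<^sub>0 complex) * sg 0 c"
  by (induction p rule: pm_induct) (auto simp: smul_add distrib_right mult_single mult.commute)
lemma mult_smul_left: "smul c p * r = smul c ((p :: ('a::monoid_add) \<Rightarrow>\<^sub>0 complex) * r)"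
  by (simp add: smul_left mult.assoc)
lemma mult_smul_right: "p * smul c r = smul c ((p :: ('a::monoid_add) \<Rightarrow>\<^sub>0 complex) * r)"
  by (simp add: smul_right mult.assoc)
lemma prod_as_lx: "(p :: ('a::monoid_add) \<Rightarrow>\<^sub>0 complex) * r = lx (\<lambda>u. lx (\<lambda>v. sg (u + v) 1) r) p"
proof (induction p rule: pm_induct)
  case (single a c)
  show ?case
  proof (induction r rule: pm_induct)
    case (single b d)
    then show ?case by (simp add: mult_single)
  qed (auto simp: distrib_left lx_add smul_add)
qed (auto simp: distrib_right lx_add)

lemma amult_eq: "amult p r = p * r"
  unfolding amult_def double_sum_lx prod_as_lx by (simp add: plus_list_def)

lemma tmult_eq: "tmult p r = p * r"
  unfolding tmult_def double_sum_lx prod_as_lx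
  by (simp add: plus_list_def plus_prod_def case_prod_beta)

lemma tens_lx: "tens x y = lx (\<lambda>u. lx (\<lambda>v. sg (u, v) 1) y) x"
  unfolding tens_def double_sum_lx ..

lemma wd_mult: "wd u * wd v = wd (u @ v)"
  by (simp add: wd_def mult_single plus_list_def)
lemma wd_Nil: "wd [] = 1"
  by (simp add: wd_def zero_list_def[symmetric])
lemma wd_Cons: "wd (g # w) = wd [g] * wd w"
  by (simp add: wd_mult)
lemma wd_append: "wd (u @ v) = wd u * wd v"
  by (simp add: wd_mult)
lemma wd_replicate: "wd (replicate n g) = wd [g] ^ n"
proof (induction n)
  case (Suc n)
  then show ?case by (subst replicate_Suc, subst wd_Cons) simp
qed (simp add: wd_Nil)
lemma smul_wd: "smul c (wd w) = sg w c"
  by (simp add: wd_def)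

instantiation nzc :: comm_monoid_mult
begin
definition one_nzc_def: "1 = Abs_nzc 1"
definition times_nzc_def: "a * b = nzc_mult a b"
lemma Rep_nz [simp]: "Rep_nzc a \<noteq> 0" using Rep_nzc[of a] by simp
lemma Rep_times [simp]: "Rep_nzc (a * b) = Rep_nzc a * Rep_nzc b"
  unfolding times_nzc_def nzc_mult_def by (simp add: Abs_nzc_inverse)
lemma Rep_one [simp]: "Rep_nzc 1 = 1"
  unfolding one_nzc_def by (simp add: Abs_nzc_inverse)
instance by standard (auto simp: Rep_nzc_inject[symmetric])
end

lemma nzc_eq_iff: "a = b \<longleftrightarrow> Rep_nzc a = Rep_nzc b" by (simp add: Rep_nzc_inject)
lemma Rep_nzc_of [simp]: "z \<noteq> 0 \<Longrightarrow> Rep_nzc (nzc_of z) = z"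
  by (simp add: nzc_of_def Abs_nzc_inverse)
lemma Rep_power [simp]: "Rep_nzc (a ^ n) = Rep_nzc a ^ n"
  by (induction n) auto
lemma nzc_mult_eq: "nzc_mult a b = a * b" by (simp add: times_nzc_def)
lemma nzc_of_1: "nzc_of 1 = 1" by (simp add: nzc_of_def one_nzc_def)
lemma nzc_cancel_left [simp]: "(a * b = a * (c::nzc)) = (b = c)"
  by (simp add: nzc_eq_iff)
lemma nzc_cancel_right [simp]: "(b * a = c * (a::nzc)) = (b = c)"
  by (simp add: nzc_eq_iff)
lemma nzc_cancel1 [simp]: "(a * b = (a::nzc)) = (b = 1)" "(a = a * b) = (b = 1)"
  "(b * a = (a::nzc)) = (b = 1)" "(a = b * a) = (b = 1)"
  by (auto simp: nzc_eq_iff)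


section \<open>the module V\<close>

type_synonym idx = "nat \<times> nzc \<times> nat \<times> nat"
type_synonym vec = "idx \<Rightarrow>\<^sub>0 complex"

definition ev :: "idx \<Rightarrow> vec" where "ev b = sg b 1"

definition Sm :: "complex \<Rightarrow> nat \<Rightarrow> complex" where "Sm q i = (\<Sum>u<i. inverse q ^ (2*u))"
definition Sp :: "complex \<Rightarrow> nat \<Rightarrow> complex" where "Sp q i = (\<Sum>u<i. q ^ (2*u))"
definition cE :: "complex \<Rightarrow> complex" where "cE s = inverse (s^2 - inverse (s^2))"

fun act_basis :: "complex \<Rightarrow> gen \<Rightarrow> idx \<Rightarrow> vec" where
  "act_basis s GF (i, m, j, k) = sg (Suc i, m, j, k) 1"
| "act_basis s (Gf n) (i, m, j, k) = sg (i, n * m, j, k) (inverse (Rep_nzc n ^ (2*i)))"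
| "act_basis s GG (i, m, j, k) = sg (i, m, j, Suc k) 1 + sg (i, m, j, k) (2 * of_nat j - 2 * of_nat i)"
| "act_basis s GE (i, m, j, k) = sg (i, m, Suc j, k) (inverse (Rep_nzc m ^ 2))
     + sg (i - 1, nzc_of (s^2) * m, j, k) (cE s * Sm (s^2) i)
     - sg (i - 1, nzc_of (inverse (s^2)) * m, j, k) (cE s * Sp (s^2) i)"

definition act :: "complex \<Rightarrow> gen \<Rightarrow> vec \<Rightarrow> vec" where
  "act s g v = lx (act_basis s g) v"

definition actw :: "complex \<Rightarrow> gen list \<Rightarrow> vec \<Rightarrow> vec" where
  "actw s w v = foldr (act s) w v"

definition opx :: "complex \<Rightarrow> falg \<Rightarrow> vec \<Rightarrow> vec" where
  "opx s p v = lx (\<lambda>w. actw s w v) p"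

definition e0 :: vec where "e0 = ev (0, 1, 0, 0)"

definition rho :: "complex \<Rightarrow> falg \<Rightarrow> vec" where "rho s p = opx s p e0"

lemma act_add: "act s g (x + y) = act s g x + act s g y" by (simp add: act_def lx_add)
lemma act_diff: "act s g (x - y) = act s g x - act s g y" by (simp add: act_def lx_diff)
lemma act_smul: "act s g (smul c x) = smul c (act s g x)" by (simp add: act_def lx_smul)
lemma act_zero [simp]: "act s g 0 = 0" by (simp add: act_def)
lemma act_sg [simp]: "act s g (sg b c) = smul c (act_basis s g b)" by (simp add: act_def)

lemma actw_Nil [simp]: "actw s [] v = v" by (simp add: actw_def)
lemma actw_Cons [simp]: "actw s (g # w) v = act s g (actw s w v)" by (simp add: actw_def)
lemma actw_append: "actw s (u @ w) v = actw s u (actw s w v)" by (simp add: actw_def)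
lemma actw_add: "actw s w (x + y) = actw s w x + actw s w y"
  by (induction w) (auto simp: act_add)
lemma actw_smul: "actw s w (smul c x) = smul c (actw s w x)"
  by (induction w) (auto simp: act_smul)
lemma actw_zero [simp]: "actw s w 0 = 0"
  by (induction w) auto
lemma actw_diff: "actw s w (x - y) = actw s w x - actw s w y"
  by (metis actw_add diff_add_cancel eq_diff_eq)

lemma opx_add: "opx s (p + r) v = opx s p v + opx s r v" by (simp add: opx_def lx_add)
lemma opx_diff: "opx s (p - r) v = opx s p v - opx s r v" by (simp add: opx_def lx_diff)
lemma opx_smul: "opx s (smul c p) v = smul c (opx s p v)" by (simp add: opx_def lx_smul)
lemma opx_zero [simp]: "opx s 0 v = 0" by (simp add: opx_def)
lemma opx_sg [simp]: "opx s (sg w c) v = smul c (actw s w v)" by (simp add: opx_def)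
lemma opx_wd [simp]: "opx s (wd w) v = actw s w v" by (simp add: wd_def)
lemma opx_vadd: "opx s p (x + y) = opx s p x + opx s p y"
  by (simp add: opx_def actw_add lx_fun_add)
lemma opx_vsmul: "opx s p (smul c x) = smul c (opx s p x)"
  by (simp add: opx_def actw_smul lx_fun_smul)
lemma opx_vzero [simp]: "opx s p 0 = 0"
  by (simp add: opx_def)

lemma opx_mult: "opx s (p * r) v = opx s p (opx s r v)"
proof (induction p rule: pm_induct)
  case (single a c)
  show ?case
  proof (induction r rule: pm_induct)
    case (single b d)
    then show ?case by (simp add: mult_single plus_list_def actw_append actw_smul)
  qed (auto simp: distrib_left opx_add opx_vadd actw_add)
qed (auto simp: distrib_right opx_add)


lemma lk_sg: "lk (sg b c) x = (if b = x then c else 0)" by (simp add: lookup_single when_def)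
lemma ev_smul: "smul c (ev b) = sg b c" by (simp add: ev_def)

locale qs =
  fixes s :: complex
  assumes s_nz: "s \<noteq> 0" and s_nroot: "\<And>n. n > 0 \<Longrightarrow> s ^ n \<noteq> 1"
begin

abbreviation "q \<equiv> s^2"
abbreviation "Q \<equiv> nzc_of (s^2)"
abbreviation "Qi \<equiv> nzc_of (inverse (s^2))"

lemma q_nz [simp]: "s^2 \<noteq> 0" using s_nz by simp
lemma q_pow_ne1: "n > 0 \<Longrightarrow> (s^2)^n \<noteq> 1"
  using s_nroot[of "2*n"] by (simp add: power_mult)
lemma RepQ [simp]: "Rep_nzc Q = s^2" "Rep_nzc Qi = inverse (s^2)"
  using s_nz by auto
lemma Q_ne [simp]: "Q \<noteq> 1" "Qi \<noteq> 1" "Q \<noteq> Qi" "Qi \<noteq> Q"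
proof -
  have a: "s^2 \<noteq> 1" using q_pow_ne1[of 1] by simp
  have b: "s^2 * s^2 \<noteq> 1" using q_pow_ne1[of 2] by (simp add: power2_eq_square)
  show "Q \<noteq> 1" using a s_nz by (simp add: nzc_eq_iff)
  show "Qi \<noteq> 1" using a s_nz by (simp add: nzc_eq_iff)
  show "Q \<noteq> Qi" "Qi \<noteq> Q" using b s_nz by (auto simp: nzc_eq_iff field_simps)
qed

lemma Sm_simps [simp]: "Sm x 0 = 0" "Sm x (Suc i) = Sm x i + inverse x ^ (2*i)"
  by (simp_all add: Sm_def)
lemma Sp_simps [simp]: "Sp x 0 = 0" "Sp x (Suc i) = Sp x i + x ^ (2*i)"
  by (simp_all add: Sp_def)

lemma rel1: "act s (Gf a) (act s (Gf n) (ev b)) - act s (Gf (a * n)) (ev b) = 0"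
proof -
  obtain i m j k where b: "b = (i, m, j, k)" by (cases b) auto
  show ?thesis unfolding b ev_def
    by (simp add: act_add act_diff act_smul smul_add smul_diff ac_simps power_mult_distrib)
qed

lemma rel2: "act s (Gf 1) (ev b) - ev b = 0"
proof -
  obtain i m j k where b: "b = (i, m, j, k)" by (cases b) auto
  show ?thesis unfolding b ev_def by simp
qed

lemma rel3: "act s (Gf a) (act s GE (ev b)) - smul ((Rep_nzc a)^2) (act s GE (act s (Gf a) (ev b))) = 0"
proof -
  obtain i m j k where b: "b = (i, m, j, k)" by (cases b) auto
  show ?thesis
  proof (cases i)
    case 0
    then show ?thesis unfolding b ev_def
      by (simp add: act_add act_diff act_smul smul_add smul_diff field_simps mult.assoc)
  next
    case (Suc i')
    then show ?thesis unfolding b ev_def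
      apply (simp add: act_add act_diff act_smul smul_add smul_diff  mult.assoc)
      apply (rule poly_mapping_eqI)
      apply (simp add: lookup_add lookup_minus lk_sg)
      apply (auto simp: field_simps mult.left_commute power_mult_distrib power2_eq_square)
      done
  qed
qed

lemma rel4: "act s (Gf a) (act s GF (ev b)) - smul (inverse ((Rep_nzc a)^2)) (act s GF (act s (Gf a) (ev b))) = 0"
proof -
  obtain i m j k where b: "b = (i, m, j, k)" by (cases b) auto
  show ?thesis unfolding b ev_def
    by (simp add: act_add act_diff act_smul smul_add smul_diff field_simps mult.assoc power_mult_distrib power_add power_mult power2_eq_square)
qed

lemma rel5: "act s (Gf a) (act s GG (ev b)) - act s GG (act s (Gf a) (ev b)) = 0"
proof -
  obtain i m j k where b: "b = (i, m, j, k)" by (cases b) auto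
  show ?thesis unfolding b ev_def
    by (simp add: act_add act_diff act_smul smul_add smul_diff field_simps mult.assoc)
qed

lemma rel6: "act s GG (act s GE (ev b)) - act s GE (act s GG (ev b)) - smul 2 (act s GE (ev b)) = 0"
proof -
  obtain i m j k where b: "b = (i, m, j, k)" by (cases b) auto
  show ?thesis
  proof (cases i)
    case 0
    then show ?thesis unfolding b ev_def
      apply (simp add: act_add act_diff act_smul smul_add smul_diff)
      apply (rule poly_mapping_eqI)
      apply (simp add: lookup_add lookup_minus lk_sg)
      apply (auto simp: algebra_simps)
      done
  next
    case (Suc i')
    then show ?thesis unfolding b ev_def
      apply (simp add: act_add act_diff act_smul smul_add smul_diff)
      apply (rule poly_mapping_eqI)
      apply (simp add: lookup_add lookup_minus lk_sg)
      apply (auto simp: algebra_simps)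
      done
  qed
qed

lemma rel7: "act s GG (act s GF (ev b)) - act s GF (act s GG (ev b)) + smul 2 (act s GF (ev b)) = 0"
proof -
  obtain i m j k where b: "b = (i, m, j, k)" by (cases b) auto
  show ?thesis unfolding b ev_def
      by (simp add: act_add act_diff act_smul smul_add smul_diff;
          (rule poly_mapping_eqI; simp add: lookup_add lookup_minus lk_sg;
           auto simp: algebra_simps))
qed

lemma rel8: "act s GE (act s GF (ev b)) - act s GF (act s GE (ev b))
   - smul (cE s) (act s (Gf Q) (ev b) - act s (Gf Qi) (ev b)) = 0"
proof -
  obtain i m j k where b: "b = (i, m, j, k)" by (cases b) auto
  show ?thesis
  proof (cases i)
    case 0
    then show ?thesis unfolding b ev_def
      by (simp add: act_add act_diff act_smul smul_add smul_diff;
          (rule poly_mapping_eqI; simp add: lookup_add lookup_minus lk_sg;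
           auto simp: algebra_simps))
  next
    case (Suc i')
    then show ?thesis unfolding b ev_def
      apply (simp add: act_add act_diff act_smul smul_add smul_diff)
      apply (rule poly_mapping_eqI)
      apply (simp add: lookup_add lookup_minus lk_sg)
      apply (auto simp: algebra_simps power_inverse[symmetric])
      done
  qed
qed


lemma opx_rel_ev: "r \<in> rels (s^2) \<Longrightarrow> opx s r (ev b) = 0"
  unfolding rels_def
  apply (auto simp: opx_diff opx_smul opx_add nzc_mult_eq nzc_of_1 smul_wd[symmetric])
  using rel1 rel2 rel3 rel4 rel5 rel6 rel7 rel8
  apply (auto simp: cE_def)
  done

lemma opx_rel: "r \<in> rels (s^2) \<Longrightarrow> opx s r v = 0"
proof (induction v rule: pm_induct)
  case (single a c)
  then show ?case using opx_rel_ev[of r a] opx_vsmul[of s r c "ev a"] by (simp add: ev_smul)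
qed (auto simp: opx_vadd)


section \<open>the ideal\<close>

abbreviation "I \<equiv> relideal (s^2)"

lemma I_sub: "csubspace I" unfolding relideal_def by (rule csubspace_cspan)

lemma gen_in_I: "r \<in> rels (s^2) \<Longrightarrow> wd u * r * wd v \<in> I"
  unfolding relideal_def amult_eq by (rule set_mp[OF cspan_superset]) blast

lemma rel_in_I: "r \<in> rels (s^2) \<Longrightarrow> r \<in> I"
  using gen_in_I[of r "[]" "[]"] by (simp add: wd_Nil)

lemma rho_add: "rho s (x + y) = rho s x + rho s y" by (simp add: rho_def opx_add)
lemma rho_smul: "rho s (smul c x) = smul c (rho s x)" by (simp add: rho_def opx_smul)
lemma rho_zero [simp]: "rho s 0 = 0" by (simp add: rho_def)
lemma rho_diff: "rho s (x - y) = rho s x - rho s y" by (simp add: rho_def opx_diff)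


lemma rho_I: "z \<in> I \<Longrightarrow> rho s z = 0"
proof -
  have "I \<subseteq> {z. rho s z \<in> {0}}"
    unfolding relideal_def
  proof (rule cspan_minimal)
    show "csubspace {z. rho s z \<in> {0}}"
      by (rule csubspace_preimage) (auto simp: rho_add rho_smul csubspace_def)
  next
    show "{wd u \<cdot> r \<cdot> wd v |u v r. r \<in> rels (s\<^sup>2)} \<subseteq> {z. rho s z \<in> {0}}"
      by (auto simp: amult_eq rho_def opx_mult opx_rel)
  qed
  then show "z \<in> I \<Longrightarrow> rho s z = 0" by auto
qed

lemma I_lmul: "z \<in> I \<Longrightarrow> p * z \<in> I"
proof -
  have "cspan {wd u \<cdot> r \<cdot> wd v |u v r. r \<in> rels (s\<^sup>2)} \<subseteq> {z. \<forall>p. p * z \<in> I}"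
  proof (rule cspan_minimal)
    show "csubspace {z. \<forall>p. p * z \<in> I}"
      using I_sub unfolding csubspace_def by (auto simp: distrib_left mult_smul_right)
  next
    show "{wd u \<cdot> r \<cdot> wd v |u v r. r \<in> rels (s\<^sup>2)} \<subseteq> {z. \<forall>p. p * z \<in> I}"
    proof (clarsimp simp: amult_eq)
      fix u v r p assume r: "r \<in> rels (s^2)"
      show "p * (wd u * r * wd v) \<in> I"
      proof (induction p rule: pm_induct)
        case (single a c)
        have "sg a c * (wd u * r * wd v) = smul c (wd (a @ u) * r * wd v)"
          by (simp add: smul_wd[symmetric] mult_smul_left wd_append mult.assoc)
        then show ?case using gen_in_I[OF r] I_sub by (simp add: csub_smul)
      qed (auto simp: distrib_right I_sub csub_add csub_0)
    qed
  qed
  then have "I \<subseteq> {z. \<forall>p. p * z \<in> I}" by (simp only: relideal_def)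
  then show "z \<in> I \<Longrightarrow> p * z \<in> I" by auto
qed

lemma I_rmul: "z \<in> I \<Longrightarrow> z * p \<in> I"
proof -
  have "cspan {wd u \<cdot> r \<cdot> wd v |u v r. r \<in> rels (s\<^sup>2)} \<subseteq> {z. \<forall>p. z * p \<in> I}"
  proof (rule cspan_minimal)
    show "csubspace {z. \<forall>p. z * p \<in> I}"
      using I_sub unfolding csubspace_def by (auto simp: distrib_right mult_smul_left)
  next
    show "{wd u \<cdot> r \<cdot> wd v |u v r. r \<in> rels (s\<^sup>2)} \<subseteq> {z. \<forall>p. z * p \<in> I}"
    proof (clarsimp simp: amult_eq)
      fix u v r p assume r: "r \<in> rels (s^2)"
      show "wd u * r * wd v * p \<in> I"
      proof (induction p rule: pm_induct)
        case (single a c)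
        have "wd u * r * wd v * sg a c = smul c (wd u * r * wd (v @ a))"
          by (simp add: smul_wd[symmetric] mult_smul_right wd_append mult.assoc)
        then show ?case using gen_in_I[OF r] I_sub by (simp add: csub_smul)
      qed (auto simp: distrib_left I_sub csub_add csub_0)
    qed
  qed
  then have "I \<subseteq> {z. \<forall>p. z * p \<in> I}" by (simp only: relideal_def)
  then show "z \<in> I \<Longrightarrow> z * p \<in> I" by auto
qed

definition M :: "gen list set \<Rightarrow> falg set" where "M S = cspan (wd ` S \<union> I)"

lemma M_sub: "csubspace (M S)" unfolding M_def by (rule csubspace_cspan)
lemma M_I: "z \<in> I \<Longrightarrow> z \<in> M S"
  unfolding M_def by (rule subsetD[OF cspan_superset[of "wd ` S \<union> I"]]) simp
lemma M_wd: "w \<in> S \<Longrightarrow> wd w \<in> M S"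
  unfolding M_def by (rule subsetD[OF cspan_superset[of "wd ` S \<union> I"]]) simp
lemma M_trans:
  assumes x: "x \<in> M S" and h: "\<And>w. w \<in> S \<Longrightarrow> wd w \<in> M T"
  shows "x \<in> M T"
proof -
  have "wd ` S \<union> I \<subseteq> M T" using h M_I by blast
  then have "cspan (wd ` S \<union> I) \<subseteq> M T" by (rule cspan_minimal[OF M_sub])
  then show ?thesis using x unfolding M_def[of S] by blast
qed
lemma M_mono: "S \<subseteq> T \<Longrightarrow> x \<in> M S \<Longrightarrow> x \<in> M T"
  using M_trans M_wd by blast


lemma M_mul:
  assumes x: "x \<in> M S"
  shows "wd u * x * wd v \<in> M ((\<lambda>w. u @ w @ v) ` S)"
proof -
  let ?T = "M ((\<lambda>w. u @ w @ v) ` S)"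
  have sub: "csubspace {x. wd u * x * wd v \<in> ?T}"
    by (rule csubspace_preimage[OF _ _ _ M_sub])
       (simp_all add: distrib_left distrib_right mult_smul_right mult_smul_left)
  have "wd ` S \<union> I \<subseteq> {x. wd u * x * wd v \<in> ?T}"
  proof
    fix y assume "y \<in> wd ` S \<union> I"
    then show "y \<in> {x. wd u * x * wd v \<in> ?T}"
    proof
      assume "y \<in> wd ` S"
      then obtain w where "w \<in> S" "y = wd w" by blast
      then show ?thesis by (simp add: wd_append[symmetric] M_wd)
    next
      assume "y \<in> I"
      then show ?thesis by (simp add: M_I I_lmul I_rmul)
    qed
  qed
  then have "cspan (wd ` S \<union> I) \<subseteq> {x. wd u * x * wd v \<in> ?T}" by (rule cspan_minimal[OF sub])
  then show ?thesis using x unfolding M_def[of S] by blast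
qed

lemma M_mul_wd: "wd w \<in> M S \<Longrightarrow> wd (u @ w @ v) \<in> M ((\<lambda>w. u @ w @ v) ` S)"
  using M_mul[of "wd w" S u v] by (simp add: wd_append mult.assoc)

lemma M_combine:
  assumes "wd w \<in> M S" "\<And>x. x \<in> S \<Longrightarrow> wd (u @ x @ v) \<in> M T"
  shows "wd (u @ w @ v) \<in> M T"
  using M_mul_wd[OF assms(1), of u v] by (rule M_trans) (auto intro: assms(2))


lemma M_from: "x - y \<in> I \<Longrightarrow> y \<in> M T \<Longrightarrow> x \<in> M T"
  using csub_add[OF M_sub, of "x - y" T y] M_I by auto

lemma M_comb: "wd w \<in> M S \<Longrightarrow> L = u @ w @ v \<Longrightarrow> (\<And>x. x \<in> S \<Longrightarrow> wd (u @ x @ v) \<in> M T) \<Longrightarrow> wd L \<in> M T"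
  using M_combine by blast

lemma M_smul_wd: "w \<in> T \<Longrightarrow> smul c (wd w) \<in> M T"
  by (rule csub_smul[OF M_sub M_wd])

lemma wd2: "wd [a, b] = wd [a] * wd [b]" by (simp add: wd_mult)

lemma B1: "wd [Gf a, Gf b] \<in> M {[Gf (a * b)]}"
proof (rule M_from)
  show "wd [Gf a, Gf b] - wd [Gf (a * b)] \<in> I"
    by (rule rel_in_I) (auto simp: rels_def nzc_mult_eq)
qed (rule M_wd, simp)

lemma B1': "wd [Gf (a * b)] \<in> M {[Gf a, Gf b]}"
proof (rule M_from)
  have "wd [Gf a, Gf b] - wd [Gf (a * b)] \<in> I"
    by (rule rel_in_I) (auto simp: rels_def nzc_mult_eq)
  then show "wd [Gf (a * b)] - wd [Gf a, Gf b] \<in> I"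
    using csub_minus[OF I_sub] by fastforce
qed (rule M_wd, simp)

lemma B2': "wd [] \<in> M {[Gf 1]}"
proof (rule M_from)
  have "wd [Gf 1] - wd [] \<in> I"
    by (rule rel_in_I) (auto simp: rels_def nzc_of_1)
  then show "wd [] - wd [Gf 1] \<in> I"
    using csub_minus[OF I_sub] by fastforce
qed (rule M_wd, simp)

lemma B3': "wd [GE, Gf m] \<in> M {[Gf m, GE]}"
proof (rule M_from)
  have r: "wd [Gf m, GE] - smul ((Rep_nzc m)^2) (wd [GE, Gf m]) \<in> I"
    by (rule rel_in_I) (auto simp: rels_def)
  have "smul (- inverse ((Rep_nzc m)^2)) (wd [Gf m, GE] - smul ((Rep_nzc m)^2) (wd [GE, Gf m]))
     = wd [GE, Gf m] - smul (inverse ((Rep_nzc m)^2)) (wd [Gf m, GE])"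
    by (simp add: smul_diff smul_neg_left)
  then show "wd [GE, Gf m] - smul (inverse ((Rep_nzc m)^2)) (wd [Gf m, GE]) \<in> I"
    using csub_smul[OF I_sub r] by metis
qed (rule M_smul_wd, simp)

lemma B4: "wd [Gf m, GF] \<in> M {[GF, Gf m]}"
proof (rule M_from)
  show "wd [Gf m, GF] - smul (inverse ((Rep_nzc m)^2)) (wd [GF, Gf m]) \<in> I"
    by (rule rel_in_I) (auto simp: rels_def)
qed (rule M_smul_wd, simp)

lemma B5: "wd [GG, Gf m] \<in> M {[Gf m, GG]}"
proof (rule M_from)
  have "wd [Gf m, GG] - wd [GG, Gf m] \<in> I"
    by (rule rel_in_I) (auto simp: rels_def)
  then show "wd [GG, Gf m] - wd [Gf m, GG] \<in> I"
    using csub_minus[OF I_sub] by fastforce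
qed (rule M_wd, simp)

lemma B6: "wd [GG, GE] \<in> M {[GE, GG], [GE]}"
proof (rule M_from)
  have "wd [GG, GE] - wd [GE, GG] - smul 2 (wd [GE]) \<in> I"
    by (rule rel_in_I) (auto simp: rels_def)
  then show "wd [GG, GE] - (wd [GE, GG] + smul 2 (wd [GE])) \<in> I"
    by (simp add: diff_diff_eq)
  show "wd [GE, GG] + smul 2 (wd [GE]) \<in> M {[GE, GG], [GE]}"
    by (intro csub_add[OF M_sub] M_wd M_smul_wd) auto
qed

lemma B7: "wd [GG, GF] \<in> M {[GF, GG], [GF]}"
proof (rule M_from)
  have "wd [GG, GF] - wd [GF, GG] + smul 2 (wd [GF]) \<in> I"
    by (rule rel_in_I) (auto simp: rels_def)
  then show "wd [GG, GF] - (wd [GF, GG] - smul 2 (wd [GF])) \<in> I"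
    by (simp add: algebra_simps)
  show "wd [GF, GG] - smul 2 (wd [GF]) \<in> M {[GF, GG], [GF]}"
    by (intro csub_diff[OF M_sub] M_wd M_smul_wd) auto
qed

lemma B8: "wd [GE, GF] \<in> M {[GF, GE], [Gf Q], [Gf Qi]}"
proof (rule M_from)
  have "wd [GE, GF] - wd [GF, GE] - smul (inverse (s^2 - inverse (s^2))) (wd [Gf Q] - wd [Gf Qi]) \<in> I"
    by (rule rel_in_I) (auto simp: rels_def)
  then show "wd [GE, GF] - (wd [GF, GE] + smul (inverse (s^2 - inverse (s^2))) (wd [Gf Q] - wd [Gf Qi])) \<in> I"
    by (simp add: diff_diff_eq)
  show "wd [GF, GE] + smul (inverse (s^2 - inverse (s^2))) (wd [Gf Q] - wd [Gf Qi]) \<in> M {[GF, GE], [Gf Q], [Gf Qi]}"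
    by (intro csub_add[OF M_sub] csub_smul[OF M_sub] csub_diff[OF M_sub] M_wd) auto
qed

abbreviation "Fs i \<equiv> replicate i GF"
abbreviation "Es i \<equiv> replicate i GE"
abbreviation "Gs i \<equiv> replicate i GG"

lemma L1: "wd (Gf n # Fs i) \<in> M {Fs i @ [Gf n]}"
proof (induction i)
  case 0
  then show ?case by (auto intro: M_wd)
next
  case (Suc i)
  show ?case
  proof (rule M_comb[OF B4[of n], of _ "[]" "Fs i"])
    fix x assume x: "x \<in> {[GF, Gf n]}"
    show "wd ([] @ x @ Fs i) \<in> M {Fs (Suc i) @ [Gf n]}"
      apply (rule M_comb[OF Suc.IH, of _ "[GF]" "[]"]) using x by (auto intro: M_wd)
  qed simp
qed

lemma L2: "wd (GG # Fs i) \<in> M {Fs i @ [GG], Fs i}"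
proof (induction i)
  case 0
  then show ?case by (auto intro: M_wd)
next
  case (Suc i)
  show ?case
  proof (rule M_comb[OF B7, of _ "[]" "Fs i"])
    fix x assume x: "x \<in> {[GF, GG], [GF]}"
    then show "wd ([] @ x @ Fs i) \<in> M {Fs (Suc i) @ [GG], Fs (Suc i)}"
    proof (elim insertE emptyE)
      assume "x = [GF, GG]" then show ?thesis
        apply (simp only:)
        apply (rule M_comb[OF Suc.IH, of _ "[GF]" "[]"]) by (auto intro: M_wd)
    next
      assume "x = [GF]" then show ?thesis by (auto intro: M_wd)
    qed
  qed simp
qed

lemma L3: "wd (GG # Es i) \<in> M {Es i @ [GG], Es i}"
proof (induction i)
  case 0
  then show ?case by (auto intro: M_wd)
next
  case (Suc i)
  show ?case
  proof (rule M_comb[OF B6, of _ "[]" "Es i"])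
    fix x assume x: "x \<in> {[GE, GG], [GE]}"
    then show "wd ([] @ x @ Es i) \<in> M {Es (Suc i) @ [GG], Es (Suc i)}"
    proof (elim insertE emptyE)
      assume "x = [GE, GG]" then show ?thesis
        apply (simp only:)
        apply (rule M_comb[OF Suc.IH, of _ "[GE]" "[]"]) by (auto intro: M_wd)
    next
      assume "x = [GE]" then show ?thesis by (auto intro: M_wd)
    qed
  qed simp
qed

lemma L4: "wd (GE # Fs (Suc i)) \<in> M {Fs (Suc i) @ [GE], Fs i @ [Gf Q], Fs i @ [Gf Qi]}"
proof (induction i)
  case 0
  then show ?case using B8 by simp
next
  case (Suc i)
  show ?case
  proof (rule M_comb[OF B8, of _ "[]" "Fs (Suc i)"])
    fix x assume "x \<in> {[GF, GE], [Gf Q], [Gf Qi]}"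
    then show "wd ([] @ x @ Fs (Suc i)) \<in> M {Fs (Suc (Suc i)) @ [GE], Fs (Suc i) @ [Gf Q], Fs (Suc i) @ [Gf Qi]}"
    proof (elim insertE emptyE)
      assume "x = [GF, GE]"
      then show ?thesis
        apply (simp only:)
        apply (rule M_comb[OF Suc.IH, of _ "[GF]" "[]"]) by (auto intro: M_wd)
    next
      assume "x = [Gf Q]"
      then show ?thesis
        apply (simp only: append.simps)
        apply (rule M_mono[OF _ L1]) by auto
    next
      assume "x = [Gf Qi]"
      then show ?thesis
        apply (simp only: append.simps)
        apply (rule M_mono[OF _ L1]) by auto
    qed
  qed simp
qed


fun nfw :: "idx \<Rightarrow> gen list" where
  "nfw (i, m, j, k) = Fs i @ Gf m # Es j @ Gs k"

lemma M_nfI: "w = nfw b \<Longrightarrow> wd w \<in> M (range nfw)"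
  by (rule M_wd) simp

lemma span_gen: "wd (g # nfw b) \<in> M (range nfw)"
proof -
  obtain i m j k where b: "b = (i, m, j, k)" by (cases b) auto
  show ?thesis
  proof (cases g)
    case GF
    then show ?thesis unfolding b by (intro M_nfI[of _ "(Suc i, m, j, k)"]) simp
  next
    case (Gf n)
    show ?thesis unfolding b Gf
    proof (rule M_comb[OF L1[of n i], of _ "[]" "Gf m # Es j @ Gs k"])
      fix x assume "x \<in> {Fs i @ [Gf n]}"
      then show "wd ([] @ x @ Gf m # Es j @ Gs k) \<in> M (range nfw)"
        apply simp
        apply (rule M_comb[OF B1[of n m], of _ "Fs i" "Es j @ Gs k"])
         apply simp
        apply (rule M_nfI[of _ "(i, n * m, j, k)"])
        by simp
    qed simp
  next
    case GG
    show ?thesis unfolding b GG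
    proof (rule M_comb[OF L2[of i], of _ "[]" "Gf m # Es j @ Gs k"])
      fix x assume "x \<in> {Fs i @ [GG], Fs i}"
      then show "wd ([] @ x @ Gf m # Es j @ Gs k) \<in> M (range nfw)"
      proof (elim insertE emptyE)
        assume "x = Fs i @ [GG]"
        then show ?thesis
          apply simp
          apply (rule M_comb[OF B5[of m], of _ "Fs i" "Es j @ Gs k"])
           apply simp
          apply simp
          apply (rule M_comb[OF L3[of j], of _ "Fs i @ [Gf m]" "Gs k"])
           apply simp
          apply (elim insertE emptyE)
           apply (rule M_nfI[of _ "(i, m, j, Suc k)"]) apply simp
          apply (rule M_nfI[of _ "(i, m, j, k)"]) apply simp
          done
      next
        assume "x = Fs i"
        then show ?thesis by (intro M_nfI[of _ "(i, m, j, k)"]) simp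
      qed
    qed simp
  next
    case GE
    show ?thesis
    proof (cases i)
      case 0
      show ?thesis unfolding b GE 0
        apply simp
        apply (rule M_comb[OF B3'[of m], of _ "[]" "Es j @ Gs k"])
         apply simp
        apply (rule M_nfI[of _ "(0, m, Suc j, k)"])
        by simp
    next
      case (Suc i')
      show ?thesis unfolding b GE Suc
      proof (rule M_comb[OF L4[of i'], of _ "[]" "Gf m # Es j @ Gs k"])
        fix x assume "x \<in> {Fs (Suc i') @ [GE], Fs i' @ [Gf Q], Fs i' @ [Gf Qi]}"
        then show "wd ([] @ x @ Gf m # Es j @ Gs k) \<in> M (range nfw)"
        proof (elim insertE emptyE)
          assume "x = Fs (Suc i') @ [GE]"
          then show ?thesis
            apply (simp only:)
            apply (rule M_comb[OF B3'[of m], of _ "Fs (Suc i')" "Es j @ Gs k"])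
             apply simp
            apply (rule M_nfI[of _ "(Suc i', m, Suc j, k)"])
            by simp
        next
          assume "x = Fs i' @ [Gf Q]"
          then show ?thesis
            apply (simp only:)
            apply (rule M_comb[OF B1[of Q m], of _ "Fs i'" "Es j @ Gs k"])
             apply simp
            apply (rule M_nfI[of _ "(i', Q * m, j, k)"])
            by simp
        next
          assume "x = Fs i' @ [Gf Qi]"
          then show ?thesis
            apply (simp only:)
            apply (rule M_comb[OF B1[of Qi m], of _ "Fs i'" "Es j @ Gs k"])
             apply simp
            apply (rule M_nfI[of _ "(i', Qi * m, j, k)"])
            by simp
        qed
      qed simp
    qed
  qed
qed

lemma span_word: "wd w \<in> M (range nfw)"
proof (induction w)
  case Nil
  show ?case
    by (rule M_mono[OF _ B2']) (auto intro: image_eqI[of _ _ "(0, 1, 0, 0)"])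
next
  case (Cons g w)
  show ?case
    by (rule M_comb[OF Cons.IH, of _ "[g]" "[]"]) (auto intro: span_gen)
qed

lemma span_all: "x \<in> M (range nfw)"
proof (induction x rule: pm_induct)
  case zero
  then show ?case by (rule csub_0[OF M_sub])
next
  case (single a c)
  then show ?case using csub_smul[OF M_sub span_word, of c a] by (simp add: smul_wd)
next
  case (add p r)
  then show ?case by (rule csub_add[OF M_sub])
qed


section \<open>rho on normal words\<close>

abbreviation "Ks \<equiv> nzc_of s"
abbreviation "Kinv \<equiv> nzc_of (inverse s)"

lemma RepK [simp]: "Rep_nzc Ks = s" "Rep_nzc Kinv = inverse s"
  using s_nz by auto

lemma ev_sg: "sg b 1 = ev b" by (simp add: ev_def)
lemma act_ev: "act s g (ev b) = act_basis s g b" by (simp add: ev_def)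

lemma actw_Gs: "actw s (Gs k) e0 = ev (0, 1, 0, k)"
  by (induction k) (auto simp: e0_def act_ev ev_sg)

lemma actw_Es: "actw s (Es j) (ev (0, 1, 0, k)) = ev (0, 1, j, k)"
  by (induction j) (auto simp: act_ev ev_sg)

lemma actw_Fs: "actw s (Fs i) (ev (i0, m, j, k)) = ev (i0 + i, m, j, k)"
  by (induction i) (auto simp: act_ev ev_sg)

lemma actw_fs: "actw s (replicate n (Gf a)) (ev (0, m, j, k)) = ev (0, a ^ n * m, j, k)"
  by (induction n) (auto simp: act_ev ev_sg mult.assoc)

lemma rho_wd: "rho s (wd w) = actw s w e0" by (simp add: rho_def)

lemma rho_nfw: "rho s (wd (nfw b)) = ev b"
proof -
  obtain i m j k where b: "b = (i, m, j, k)" by (cases b) auto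
  show ?thesis unfolding b rho_wd
    by (simp add: actw_append actw_Gs actw_Es actw_Fs act_ev ev_sg)
qed

definition pbww :: "nat \<Rightarrow> nzc \<Rightarrow> nat \<Rightarrow> nat \<Rightarrow> gen list" where
  "pbww i m j k = Fs i @ replicate i (Gf Kinv) @ [Gf m] @ replicate j (Gf Kinv) @ Es j @ Gs k"

definition pbwc :: "nat \<Rightarrow> nat \<Rightarrow> nat \<Rightarrow> complex" where
  "pbwc i j k = inverse (qfact (s^2) i * qfact (s^2) j * of_nat (fact k))"

lemma pbw_eq: "pbw s i m j k = smul (pbwc i j k) (wd (pbww i m j k))"
  by (simp add: pbw_def pbwc_def pbww_def)

lemma qint_nz: "t > 0 \<Longrightarrow> qint (s^2) t \<noteq> 0"
proof -
  assume t: "t > 0"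
  have a: "(s^2)^t * (s^2)^t \<noteq> 1" using s_nroot[of "4*t"] t
    by (simp add: power_mult[symmetric] power_add[symmetric] mult_2[symmetric])
  have b: "s^2 * s^2 \<noteq> 1" using s_nroot[of 4]
    by (metis numeral_Bit0 power_add zero_less_numeral mult_2 power2_eq_square power_mult)
  have "(s^2)^t - inverse ((s^2)^t) \<noteq> 0" using a s_nz by (auto simp: field_simps)
  moreover have "s^2 - inverse (s^2) \<noteq> 0" using b s_nz by (auto simp: field_simps)
  ultimately show ?thesis by (simp add: qint_def)
qed

lemma qfact_nz: "qfact (s^2) n \<noteq> 0"
  unfolding qfact_def using qint_nz by (auto simp: prod_zero_iff)

lemma pbwc_nz: "pbwc i j k \<noteq> 0"
  using qfact_nz by (simp add: pbwc_def)

lemma rho_pbww: "rho s (wd (pbww i m j k)) = ev (i, Kinv ^ i * (m * Kinv ^ j), j, k)"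
  unfolding rho_wd pbww_def
  by (simp add: actw_append actw_Gs actw_Es actw_Fs actw_fs act_ev ev_sg)

definition grade :: "idx \<Rightarrow> nzc" where
  "grade b = (case b of (i, m, j, k) \<Rightarrow> m * Ks ^ (i + j))"

lemma grade_pbww: "grade (i, Kinv ^ i * (m * Kinv ^ j), j, k) = m"
  using s_nz by (simp add: grade_def nzc_eq_iff field_simps power_add power_inverse[symmetric]) 

definition sigma :: "vec \<Rightarrow> falg" where "sigma v = lx (\<lambda>b. wd (nfw b)) v"

lemma sigma_add: "sigma (x + y) = sigma x + sigma y" by (simp add: sigma_def lx_add)
lemma sigma_smul: "sigma (smul c x) = smul c (sigma x)" by (simp add: sigma_def lx_smul)
lemma sigma_zero [simp]: "sigma 0 = 0" by (simp add: sigma_def)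
lemma sigma_ev [simp]: "sigma (ev b) = wd (nfw b)" by (simp add: sigma_def ev_def)

lemma normal_form: "x - sigma (rho s x) \<in> I"
proof -
  have sub: "csubspace {x. x - sigma (rho s x) \<in> I}"
    using I_sub unfolding csubspace_def
    by (auto simp: rho_add sigma_add rho_smul sigma_smul smul_diff[symmetric] add_diff_add)
  have "wd ` range nfw \<union> I \<subseteq> {x. x - sigma (rho s x) \<in> I}"
    using csub_0[OF I_sub] by (auto simp: rho_nfw rho_I simp del: nfw.simps)
  then have "M (range nfw) \<subseteq> {x. x - sigma (rho s x) \<in> I}"
    unfolding M_def by (rule cspan_minimal[OF sub])
  then show ?thesis using span_all by blast
qed


definition Wg :: "nzc \<Rightarrow> vec set" where "Wg m = {v. \<forall>b\<in>ks v. grade b = m}"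

lemma keys_smul: "ks (smul c v) \<subseteq> ks v"
  by (auto simp: in_keys_iff)

lemma Wg_sub: "csubspace (Wg m)"
  unfolding csubspace_def Wg_def
proof (intro conjI ballI allI; clarsimp)
  fix x y b assume "\<forall>b\<in>ks x. grade b = m" "\<forall>b\<in>ks y. grade b = m" "b \<in> ks (x + y)"
  then show "grade b = m" using keys_add[of x y] by blast
next
  fix c x b assume "\<forall>b\<in>ks x. grade b = m" "b \<in> ks (smul c x)"
  then show "grade b = m" using keys_smul[of c x] by blast
qed

lemma rho_Uhom: "y \<in> Uhom s m \<Longrightarrow> rho s y \<in> Wg m"
proof -
  assume y: "y \<in> Uhom s m"
  have sub: "csubspace {x. rho s x \<in> Wg m}"
    by (rule csubspace_preimage[OF _ _ _ Wg_sub]) (auto simp: rho_add rho_smul)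
  have "{pbw s i m j k | i j k. True} \<union> I \<subseteq> {x. rho s x \<in> Wg m}"
  proof
    fix x assume "x \<in> {pbw s i m j k | i j k. True} \<union> I"
    then show "x \<in> {x. rho s x \<in> Wg m}"
    proof
      assume "x \<in> {pbw s i m j k | i j k. True}"
      then obtain i j k where x: "x = pbw s i m j k" by blast
      show ?thesis unfolding x pbw_eq
        using grade_pbww[of i m j k]
        by (simp add: rho_smul rho_pbww Wg_def ev_def)
    next
      assume "x \<in> I"
      then show ?thesis using csub_0[OF Wg_sub] by (simp add: rho_I)
    qed
  qed
  then have "Uhom s m \<subseteq> {x. rho s x \<in> Wg m}"
    unfolding Uhom_def by (rule cspan_minimal[OF sub])
  then show ?thesis using y by blast
qed

lemma rho_sum: "rho s (sum f A) = (\<Sum>a\<in>A. rho s (f a))"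
  by (induction A rule: infinite_finite_induct) (auto simp: rho_add)

lemma part2:
  assumes fin: "finite M0" and y: "\<forall>m\<in>M0. y m \<in> Uhom s m" and sum: "(\<Sum>m\<in>M0. y m) \<in> I"
    and m0: "m0 \<in> M0"
  shows "y m0 \<in> I"
proof -
  have "rho s (\<Sum>m\<in>M0. y m) = 0" using rho_I[OF sum] .
  then have z: "(\<Sum>m\<in>M0. rho s (y m)) = 0" by (simp add: rho_sum)
  have "rho s (y m0) = 0"
  proof (rule poly_mapping_eqI)
    fix b
    show "lk (rho s (y m0)) b = lk 0 b"
    proof (cases "grade b = m0")
      case True
      have "lk (\<Sum>m\<in>M0. rho s (y m)) b = (\<Sum>m\<in>M0. lk (rho s (y m)) b)" by (simp add: lookup_sum)
      also have "\<dots> = (\<Sum>m\<in>M0. if m = m0 then lk (rho s (y m)) b else 0)"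
      proof (rule sum.cong)
        fix m assume "m \<in> M0"
        then have "rho s (y m) \<in> Wg m" using y rho_Uhom by blast
        then show "lk (rho s (y m)) b = (if m = m0 then lk (rho s (y m)) b else 0)"
          using True by (auto simp: Wg_def in_keys_iff)
      qed simp
      also have "\<dots> = lk (rho s (y m0)) b" using fin m0 by simp
      finally show ?thesis using z by simp
    next
      case False
      have "rho s (y m0) \<in> Wg m0" using y rho_Uhom m0 by blast
      then show ?thesis using False by (auto simp: Wg_def in_keys_iff)
    qed
  qed
  then show ?thesis using normal_form[of "y m0"] by simp
qed


section \<open>part 1: the functional Phi\<close>

definition Phi :: "(idx \<Rightarrow> complex) \<Rightarrow> falg2 \<Rightarrow> falg" where
  "Phi l P = lx (\<lambda>(u, v). smul (lxs l (actw s v e0)) (wd u)) P"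

definition comp :: "(idx \<Rightarrow> complex) \<Rightarrow> gen list \<Rightarrow> idx \<Rightarrow> complex" where
  "comp l b = (\<lambda>x. lxs l (actw s b (ev x)))"

lemma Phi_add: "Phi l (P + R) = Phi l P + Phi l R" by (simp add: Phi_def lx_add)
lemma Phi_smul: "Phi l (smul c P) = smul c (Phi l P)" by (simp add: Phi_def lx_smul)
lemma Phi_zero [simp]: "Phi l 0 = 0" by (simp add: Phi_def)
lemma Phi_diff: "Phi l (P - R) = Phi l P - Phi l R" by (simp add: Phi_def lx_diff)
lemma Phi_sg: "Phi l (sg (u, v) c) = smul (c * lxs l (actw s v e0)) (wd u)"
  by (simp add: Phi_def)

lemma lxs_actw: "lxs l (actw s b x) = lxs (comp l b) x"
proof (induction x rule: pm_induct)
  case (single a c)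
  have "actw s b (sg a c) = smul c (actw s b (ev a))"
    by (simp add: ev_smul[symmetric] actw_smul)
  then show ?case by (simp add: lxs_smul comp_def)
qed (auto simp: actw_add lxs_add)

lemma Phi_mult: "Phi l (sg (a, b) 1 * P) = wd a * Phi (comp l b) P"
proof (induction P rule: pm_induct)
  case (single x c)
  obtain u v where x: "x = (u, v)" by (cases x) auto
  show ?case unfolding x
    by (simp add: mult_single Phi_sg plus_prod_def plus_list_def actw_append lxs_actw
        mult_smul_right wd_append)
qed (auto simp: distrib_left Phi_add)

lemma comp_Nil: "comp l [] = l"
  by (rule ext) (simp add: comp_def ev_def)

lemma lxs_ev: "lxs l (ev b) = l b" by (simp add: ev_def)

lemma comp1: "comp l [g] = (\<lambda>b. lxs l (act_basis s g b))"
  by (rule ext) (simp add: comp_def act_ev)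

lemma Phi_Nil: "Phi l (sg ([], []) 1) = smul (l (0, 1, 0, 0)) (wd [])"
  by (simp add: Phi_sg e0_def lxs_ev)

lemma nfw_Suc: "nfw (Suc i, n, j, k) = GF # nfw (i, n, j, k)" by simp

lemma DW_Cons: "Delta_word s (g # w) = Delta_gen s g * Delta_word s w"
  by (simp add: tmult_eq)

lemma stageG:
  "(\<And>m j k. j > 0 \<or> k > 0 \<Longrightarrow> l (0, m, j, k) = 0) \<Longrightarrow>
   Phi l (Delta_word s (Gs k)) = smul (l (0, 1, 0, 0)) (wd (Gs k))"
proof (induction k arbitrary: l)
  case 0
  then show ?case by (simp add: Phi_Nil)
next
  case (Suc k)
  have h: "comp l [GG] (0, m, j, k') = 0" if "j > 0 \<or> k' > 0" for m j k'
    using Suc.prems that by (simp add: comp1 lxs_add)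
  have IH: "Phi (comp l [GG]) (Delta_word s (Gs k)) = 0"
    using Suc.IH[of "comp l [GG]", OF h] by (simp add: comp1 lxs_add Suc.prems)
  have "Phi l (Delta_word s (Gs (Suc k))) =
     wd [] * Phi (comp l [GG]) (Delta_word s (Gs k)) + wd [GG] * Phi (comp l []) (Delta_word s (Gs k))"
    by (simp add: tmult_eq Delta_gen_def distrib_right Phi_add Phi_mult)
  also have "\<dots> = wd [GG] * smul (l (0, 1, 0, 0)) (wd (Gs k))"
    using Suc.IH[of l, OF Suc.prems] IH by (simp add: comp_Nil)
  also have "\<dots> = smul (l (0, 1, 0, 0)) (wd (Gs (Suc k)))"
    by (simp add: mult_smul_right wd_mult)
  finally show ?case .
qed

lemma stageE:
  "(\<And>m j k. j > 0 \<or> k > 0 \<Longrightarrow> l (0, m, j, k) = 0) \<Longrightarrow>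
   Phi l (Delta_word s (Es j @ Gs k)) = smul (l (0, Ks ^ j, 0, 0)) (wd (Es j @ Gs k))"
proof (induction j arbitrary: l)
  case 0
  then show ?case using stageG by simp
next
  case (Suc j)
  have h1: "comp l [Gf Ks] (0, m, j', k') = 0" if "j' > 0 \<or> k' > 0" for m j' k'
    using Suc.prems that by (simp add: comp1)
  have h2: "comp l [GE] (0, m, j', k') = 0" for m j' k'
    using Suc.prems by (simp add: comp1 lxs_add lxs_diff)
  have "Phi l (Delta_word s (Es (Suc j) @ Gs k)) =
     wd [GE] * Phi (comp l [Gf Ks]) (Delta_word s (Es j @ Gs k))
     + wd [Gf Kinv] * Phi (comp l [GE]) (Delta_word s (Es j @ Gs k))"
    by (simp add: tmult_eq Delta_gen_def distrib_right Phi_add Phi_mult)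
  also have "\<dots> = wd [GE] * smul (l (0, Ks ^ Suc j, 0, 0)) (wd (Es j @ Gs k))"
    using Suc.IH[of "comp l [Gf Ks]", OF h1] Suc.IH[of "comp l [GE]", OF h2] h2
    by (simp add: comp1)
  also have "\<dots> = smul (l (0, Ks ^ Suc j, 0, 0)) (wd (Es (Suc j) @ Gs k))"
    by (simp add: mult_smul_right wd_mult)
  finally show ?case .
qed

lemma stagef:
  "(\<And>m j k. j > 0 \<or> k > 0 \<Longrightarrow> l (0, m, j, k) = 0) \<Longrightarrow>
   Phi l (Delta_word s (Gf n # Es j @ Gs k)) = smul (l (0, n * Ks ^ j, 0, 0)) (wd (Gf n # Es j @ Gs k))"
proof -
  assume h: "\<And>m j k. j > 0 \<or> k > 0 \<Longrightarrow> l (0, m, j, k) = 0"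
  have h1: "comp l [Gf n] (0, m, j', k') = 0" if "j' > 0 \<or> k' > 0" for m j' k'
    using h that by (simp add: comp1)
  have "Phi l (Delta_word s (Gf n # Es j @ Gs k)) = wd [Gf n] * Phi (comp l [Gf n]) (Delta_word s (Es j @ Gs k))"
    by (simp add: tmult_eq Delta_gen_def Phi_mult)
  also have "\<dots> = smul (l (0, n * Ks ^ j, 0, 0)) (wd (Gf n # Es j @ Gs k))"
    using stageE[of "comp l [Gf n]", OF h1] by (simp add: comp1 mult_smul_right wd_mult)
  finally show ?thesis .
qed

lemma stageF:
  "(\<And>i m j k. i > 0 \<or> j > 0 \<or> k > 0 \<Longrightarrow> l (i, m, j, k) = 0) \<Longrightarrow>
   Phi l (Delta_word s (nfw (i, n, j, k))) = smul (l (0, Ks ^ i * (n * Ks ^ j), 0, 0)) (wd (nfw (i, n, j, k)))"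
proof (induction i arbitrary: l)
  case 0
  then show ?case using stagef[of l n j k] by simp
next
  case (Suc i)
  have h1: "comp l [Gf Ks] (i', m, j', k') = 0" if "i' > 0 \<or> j' > 0 \<or> k' > 0" for i' m j' k'
    using Suc.prems that by (simp add: comp1)
  have h2: "comp l [GF] (i', m, j', k') = 0" for i' m j' k'
    using Suc.prems by (simp add: comp1)
  have "Phi l (Delta_word s (nfw (Suc i, n, j, k))) =
     wd [GF] * Phi (comp l [Gf Ks]) (Delta_word s (nfw (i, n, j, k)))
     + wd [Gf Kinv] * Phi (comp l [GF]) (Delta_word s (nfw (i, n, j, k)))"
    unfolding nfw_Suc by (simp add: tmult_eq Delta_gen_def distrib_right Phi_add Phi_mult del: nfw.simps)
  also have "\<dots> = wd [GF] * smul (l (0, Ks ^ Suc i * (n * Ks ^ j), 0, 0)) (wd (nfw (i, n, j, k)))"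
    using Suc.IH[of "comp l [Gf Ks]", OF h1] Suc.IH[of "comp l [GF]", OF h2] h2
    by (simp add: comp1 mult.assoc del: nfw.simps)
  also have "\<dots> = smul (l (0, Ks ^ Suc i * (n * Ks ^ j), 0, 0)) (wd (nfw (Suc i, n, j, k)))"
    by (simp add: mult_smul_right wd_mult)
  finally show ?case .
qed


definition psi :: "nzc \<Rightarrow> idx \<Rightarrow> complex" where
  "psi n b = (case b of (i, m, j, k) \<Rightarrow> if i = 0 \<and> j = 0 \<and> k = 0 \<and> m = n then 1 else 0)"

lemma Phi_psi_nf: "Phi (psi n) (Delta_word s (nfw b)) = (if grade b = n then wd (nfw b) else 0)"
proof -
  obtain i m j k where b: "b = (i, m, j, k)" by (cases b) auto
  have "Phi (psi n) (Delta_word s (nfw (i, m, j, k))) =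
        smul (psi n (0, Ks ^ i * (m * Ks ^ j), 0, 0)) (wd (nfw (i, m, j, k)))"
    by (rule stageF) (auto simp: psi_def)
  moreover have "Ks ^ i * (m * Ks ^ j) = grade (i, m, j, k)"
    by (simp add: grade_def power_add ac_simps)
  ultimately show ?thesis unfolding b by (simp add: psi_def del: nfw.simps)
qed

lemma Phi_tens1: "Phi l (tens y (wd w)) = smul (lxs l (actw s w e0)) y"
proof -
  have "tens y (wd w) = lx (\<lambda>u. sg (u, w) 1) y" by (simp add: tens_lx wd_def)
  then have "Phi l (tens y (wd w)) = lx (\<lambda>u. smul (lxs l (actw s w e0)) (wd u)) y"
    by (simp add: Phi_def lx_lx)
  also have "\<dots> = smul (lxs l (actw s w e0)) y"
    by (induction y rule: pm_induct) (auto simp: lx_add smul_add mult.commute smul_wd)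
  finally show ?thesis .
qed

lemma lx_const_smul: "lx (\<lambda>v. smul (f v) X) z = smul (lxs f z) X"
  by (induction z rule: pm_induct) (auto simp: lx_add lxs_add smul_add_left)

lemma Phi_tens2: "z \<in> I \<Longrightarrow> Phi l (tens (wd w) z) = 0"
proof -
  assume z: "z \<in> I"
  have "tens (wd w) z = lx (\<lambda>v. sg (w, v) 1) z" by (simp add: tens_lx wd_def)
  then have "Phi l (tens (wd w) z) = lx (\<lambda>v. smul (lxs l (actw s v e0)) (wd w)) z"
    by (simp add: Phi_def lx_lx)
  also have "\<dots> = smul (lxs (\<lambda>v. lxs l (actw s v e0)) z) (wd w)"
    by (rule lx_const_smul)
  also have "lxs (\<lambda>v. lxs l (actw s v e0)) z = lxs l (rho s z)"
    by (simp add: rho_def opx_def lxs_lx)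
  also have "\<dots> = 0" using rho_I[OF z] by simp
  finally show ?thesis by simp
qed

lemma Mleft: "wd [Gf (a ^ n * b)] \<in> M {replicate n (Gf a) @ [Gf b]}"
proof (induction n)
  case 0
  then show ?case by (auto intro: M_wd)
next
  case (Suc n)
  have "wd [Gf (a * (a ^ n * b))] \<in> M {[Gf a, Gf (a ^ n * b)]}" by (rule B1')
  then show ?case
  proof (simp only: power_Suc mult.assoc, rule M_trans)
    fix w assume "w \<in> {[Gf a, Gf (a ^ n * b)]}"
    then show "wd w \<in> M {replicate (Suc n) (Gf a) @ [Gf b]}"
      apply simp
      apply (rule M_comb[OF Suc.IH, of _ "[Gf a]" "[]"])
      by (auto intro: M_wd)
  qed
qed

lemma Mright: "wd [Gf (b * a ^ n)] \<in> M {[Gf b] @ replicate n (Gf a)}"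
proof (induction n)
  case 0
  then show ?case by (auto intro: M_wd)
next
  case (Suc n)
  have "wd [Gf ((b * a ^ n) * a)] \<in> M {[Gf (b * a ^ n), Gf a]}" by (rule B1')
  then show ?case
  proof (simp only: power_Suc2 mult.assoc[symmetric], rule M_trans)
    fix w assume "w \<in> {[Gf (b * a ^ n), Gf a]}"
    then show "wd w \<in> M {[Gf b] @ replicate (Suc n) (Gf a)}"
      apply simp
      apply (rule M_comb[OF Suc.IH, of _ "[]" "[Gf a]"])
      by (auto intro: M_wd simp: replicate_append_same[symmetric])
  qed
qed

lemma Uhom_sub: "csubspace (Uhom s m)" unfolding Uhom_def by (rule csubspace_cspan)
lemma I_Uhom: "z \<in> I \<Longrightarrow> z \<in> Uhom s m"
  unfolding Uhom_def by (rule subsetD[OF cspan_superset]) simp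

lemma pbww_Uhom: "wd (pbww i m j k) \<in> Uhom s m"
proof -
  have "wd (pbww i m j k) = smul (inverse (pbwc i j k)) (pbw s i m j k)"
    using pbwc_nz by (simp add: pbw_eq)
  moreover have "pbw s i m j k \<in> Uhom s m"
    unfolding Uhom_def by (rule subsetD[OF cspan_superset]) blast
  ultimately show ?thesis using csub_smul[OF Uhom_sub] by metis
qed

lemma M_Uhom: "x \<in> M S \<Longrightarrow> (\<And>w. w \<in> S \<Longrightarrow> wd w \<in> Uhom s m) \<Longrightarrow> x \<in> Uhom s m"
proof -
  assume x: "x \<in> M S" and h: "\<And>w. w \<in> S \<Longrightarrow> wd w \<in> Uhom s m"
  have "wd ` S \<union> I \<subseteq> Uhom s m" using h I_Uhom by blast
  then have "M S \<subseteq> Uhom s m" unfolding M_def by (rule cspan_minimal[OF Uhom_sub])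
  then show ?thesis using x by blast
qed

lemma nf_Uhom: "wd (nfw b) \<in> Uhom s (grade b)"
proof -
  obtain i n j k where b: "b = (i, n, j, k)" by (cases b) auto
  define m where "m = grade b"
  have nm: "n = Kinv ^ i * (m * Kinv ^ j)"
    unfolding m_def b using s_nz
    by (simp add: grade_def nzc_eq_iff field_simps power_add power_inverse[symmetric])
  have A: "wd [Gf n] \<in> M {replicate i (Gf Kinv) @ [Gf m] @ replicate j (Gf Kinv)}"
    unfolding nm using Mleft
  proof (rule M_trans)
    fix w assume "w \<in> {replicate i (Gf Kinv) @ [Gf (m * Kinv ^ j)]}"
    then show "wd w \<in> M {replicate i (Gf Kinv) @ [Gf m] @ replicate j (Gf Kinv)}"
      apply simp
      apply (rule M_comb[OF Mright[of m Kinv j], of _ "replicate i (Gf Kinv)" "[]"])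
      by (auto intro: M_wd)
  qed
  have "wd (nfw b) \<in> M {pbww i m j k}"
    unfolding b
    apply (rule M_comb[OF A, of _ "Fs i" "Es j @ Gs k"])
     apply simp
    by (auto intro: M_wd simp: pbww_def)
  then show ?thesis unfolding m_def[symmetric]
    by (rule M_Uhom) (auto intro: pbww_Uhom)
qed

lemma sigma_lx_Delta: "Delta s (sigma v) = lx (\<lambda>b. Delta_word s (nfw b)) v"
  by (simp add: Delta_def lx_def[symmetric] sigma_def lx_lx wd_def)

lemma part1:
  assumes X: "right_coideal s Xt" and x: "x \<in> Xt"
  shows "\<exists>M0 y. finite M0 \<and> (\<forall>m\<in>M0. y m \<in> Xt \<inter> Uhom s m) \<and> x = (\<Sum>m\<in>M0. y m)"
proof -
  have Xsub: "csubspace Xt" and IX: "I \<subseteq> Xt"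
    and D: "\<And>x. x \<in> Xt \<Longrightarrow> Delta s x \<in> cspan ({tens y (wd w) | y w. y \<in> Xt} \<union> {tens (wd w) z | w z. z \<in> I})"
    using X unfolding right_coideal_def by auto
  define v where "v = rho s x"
  define z where "z = x - sigma v"
  have zI: "z \<in> I" unfolding z_def v_def by (rule normal_form)
  have x'X: "sigma v \<in> Xt"
    using csub_diff[OF Xsub x IX[THEN subsetD, OF zI]] unfolding z_def by simp
  define y where "y n = lx (\<lambda>b. if grade b = n then wd (nfw b) else 0) v" for n
  have PhiX: "Phi (psi n) P \<in> Xt" if "P \<in> cspan ({tens y (wd w) | y w. y \<in> Xt} \<union> {tens (wd w) z | w z. z \<in> I})" for P n
  proof -
    have sub: "csubspace {P. Phi (psi n) P \<in> Xt}"
      by (rule csubspace_preimage[OF _ _ _ Xsub]) (auto simp: Phi_add Phi_smul)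
    have "{tens y (wd w) | y w. y \<in> Xt} \<union> {tens (wd w) z | w z. z \<in> I} \<subseteq> {P. Phi (psi n) P \<in> Xt}"
      using csub_0[OF Xsub] by (auto simp: Phi_tens1 Phi_tens2 csub_smul[OF Xsub])
    then show ?thesis using cspan_minimal[OF sub] that by blast
  qed
  have yX: "y n \<in> Xt" for n
  proof -
    have "Phi (psi n) (Delta s (sigma v)) = y n"
      unfolding sigma_lx_Delta y_def Phi_def lx_lx
      unfolding Phi_def[symmetric] by (rule lx_cong) (simp add: Phi_psi_nf del: nfw.simps)
    then show ?thesis using PhiX[OF D[OF x'X], of n] by simp
  qed
  have yU: "y n \<in> Uhom s n" for n
    unfolding y_def
    by (rule csub_lx[OF Uhom_sub]) (auto intro: nf_Uhom csub_0[OF Uhom_sub] simp del: nfw.simps)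
  define M0 where "M0 = insert 1 (grade ` ks v)"
  define Y where "Y n = y n + (if n = 1 then z else 0)" for n
  have fin: "finite M0" unfolding M0_def by simp
  have "\<forall>m\<in>M0. Y m \<in> Xt \<inter> Uhom s m"
    unfolding Y_def using yX yU zI IX I_Uhom csub_0[OF Xsub] csub_0[OF Uhom_sub]
    by (auto intro!: csub_add[OF Xsub] csub_add[OF Uhom_sub])
  moreover have "x = (\<Sum>m\<in>M0. Y m)"
  proof -
    have "(\<Sum>m\<in>M0. y m) = lx (\<lambda>b. \<Sum>m\<in>M0. if grade b = m then wd (nfw b) else 0) v"
      unfolding y_def by (simp add: lx_fun_sum)
    also have "\<dots> = sigma v"
      unfolding sigma_def by (rule lx_cong) (auto simp: M0_def simp del: nfw.simps)
    finally have "(\<Sum>m\<in>M0. y m) = sigma v" .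
    moreover have "(\<Sum>m\<in>M0. (if m = 1 then z else 0)) = z"
      using fin by (simp add: M0_def)
    ultimately show ?thesis unfolding Y_def z_def by (simp add: sum.distrib)
  qed
  ultimately show ?thesis using fin by blast
qed

end


lemma root_unity_algebraic:
  fixes q :: complex
  assumes "n > 0" "q ^ n = 1"
  shows "algebraic q"
proof (rule algebraic_root[of 1 "monom 1 n" q])
  show "algebraic (1::complex)" by (rule rat_imp_algebraic) simp
  show "poly (monom 1 n) q = 1" using assms by (simp add: poly_monom)
  show "\<forall>i. coeff (monom (1::complex) n) i \<in> \<int>" by (simp add: coeff_monom)
  show "lead_coeff (monom (1::complex) n) = 1" by (simp add: degree_monom_eq)
  show "degree (monom (1::complex) n) > 0" using assms by (simp add: degree_monom_eq)
qed

theorem corollary4p2: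
  fixes q s :: complex and Xt :: "falg set"
  assumes "\<not> algebraic q"
    and "s ^ 2 = q"
    and "right_coideal s Xt"
  shows "(\<forall>x\<in>Xt. \<exists>M y. finite M \<and> (\<forall>m\<in>M. y m \<in> Xt \<inter> Uhom s m) \<and> x = (\<Sum>m\<in>M. y m))
       \<and> (\<forall>M y. finite M \<and> (\<forall>m\<in>M. y m \<in> Xt \<inter> Uhom s m) \<and> (\<Sum>m\<in>M. y m) \<in> relideal q
            \<longrightarrow> (\<forall>m\<in>M. y m \<in> relideal q))"
proof -
  have q0: "q \<noteq> 0" using assms(1) by auto
  then have s0: "s \<noteq> 0" using assms(2) by auto
  have nr: "s ^ n \<noteq> 1" if "n > 0" for n
  proof
    assume "s ^ n = 1"
    then have "q ^ n = 1" using assms(2) by (metis power_mult power_mult_distrib mult.commute power_one)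
    then show False using root_unity_algebraic[OF that] assms(1) by blast
  qed
  interpret qs s using s0 nr by unfold_locales auto
  show ?thesis
  proof (intro conjI ballI allI impI)
    fix x assume "x \<in> Xt"
    then show "\<exists>M y. finite M \<and> (\<forall>m\<in>M. y m \<in> Xt \<inter> Uhom s m) \<and> x = (\<Sum>m\<in>M. y m)"
      using part1[OF assms(3)] by blast
  next
    fix M0 y m
    assume h: "finite M0 \<and> (\<forall>m\<in>M0. y m \<in> Xt \<inter> Uhom s m) \<and> (\<Sum>m\<in>M0. y m) \<in> relideal q"
      and m: "m \<in> M0"
    show "y m \<in> relideal q"
      using part2[of M0 y m] h m assms(2) by blast
  qed
qed

end
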